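(* Consider the two-player non-cooperative pricing game $\langle \mathcal{R}, (P_i)_{i\in\mathcal{R}}, (U_i)_{i\in\mathcal{R}}\rangle$ between two multi-homing mobile devices (MMD relays) $\mathcal{R}=\{r_1,r_2\}$, in which the strategy of player $r_i$ is its charging price $p_{r_i}\in[0,+\infty)$ and, with the offered bandwidths $\omega_1,\omega_2>0$ held fixed, the utility of player $r_i$ ($i\in\{1,2\}$, $j\neq i$) is $$U_i(p_{r_i},p_{r_j}) \;=\; p_{r_i}\cdot \frac{n}{1+2^{\,p_{r_i}-p_{r_j}}\,\dfrac{\omega_j Y_j}{\omega_i Y_i}} \;-\; c_i\,\omega_i .$$ Then this game has a pure-strategy Nash equilibrium.
   Context: Here $n>0$ is the total number of ordinary mobile devices (OMDs) in the system, and the expression $n/(1+2^{p_{r_i}-p_{r_j}}\omega_jY_j/(\omega_iY_i))$ is the number of OMDs attached to $r_i$ at the evolutionary equilibrium of the OMDs' relay-selection game. $c_i\ge 0$ is the relay cost of $r_i$ per unit bandwidth. $Y_i=\max\{\tau_i,b_i\}>0$ is a channel-quality constant, where $b_i=1+SNR_{s_i d_i}$, $\tau_i=1+SNR_{s_i d_i}+SNR_{s_i r_i d_i}$, with $SNR_{s_i d_i}=P|h_{s_id_i}|^2/\sigma^2$ and $SNR_{s_ir_id_i}=\frac{P^2|h_{s_ir_i}|^2|h_{r_id_i}|^2}{\sigma^2(\sigma^2+P|h_{s_ir_i}|^2+P|h_{r_id_i}|^2)}$ (transmit power $P>0$, noise variance $\sigma^2>0$, channel gains $h$ between source $s_i$,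 relay $r_i$, destination $d_i$). A pure Nash equilibrium is a pair $(p_{r_1}^*,p_{r_2}^* )$ such that for each $i$, $U_i(p_{r_i}^*,p_{r_j}^* )\ge U_i(p_{r_i},p_{r_j}^* )$ for all $p_{r_i}\ge 0$. *)

theory Defs
  imports Complex_Main
begin

definition snr_direct :: "real \<Rightarrow> real \<Rightarrow> complex \<Rightarrow> real" where
  "snr_direct P \<sigma>2 hsd = P * (cmod hsd)^2 / \<sigma>2"

definition snr_relay :: "real \<Rightarrow> real \<Rightarrow> complex \<Rightarrow> complex \<Rightarrow> real" where
  "snr_relay P \<sigma>2 hsr hrd =
     P^2 * (cmod hsr)^2 * (cmod hrd)^2 / (\<sigma>2 * (\<sigma>2 + P * (cmod hsr)^2 + P * (cmod hrd)^2))"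

definition chanY :: "real \<Rightarrow> real \<Rightarrow> complex \<Rightarrow> complex \<Rightarrow> complex \<Rightarrow> real" where
  "chanY P \<sigma>2 hsd hsr hrd =
     max (1 + snr_direct P \<sigma>2 hsd + snr_relay P \<sigma>2 hsr hrd) (1 + snr_direct P \<sigma>2 hsd)"

definition util :: "real \<Rightarrow> real \<Rightarrow> real \<Rightarrow> real \<Rightarrow> real \<Rightarrow> real \<Rightarrow> real \<Rightarrow> real \<Rightarrow> real" where
  "util n ci wi wj Yi Yj p_i p_j =
     p_i * (n / (1 + 2 powr (p_i - p_j) * ((wj * Yj) / (wi * Yi)))) - ci * wi"

end

theory Submission
  imports Defs
begin

lemma key:
  fixes K ps pj q n :: real
  assumes K: "K > 0" and n: "n > 0"
    and foc: "2 powr (ps - pj) * K * (ps * ln 2 - 1) = 1"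
  shows "q * (n / (1 + 2 powr (q - pj) * K)) \<le> ps * (n / (1 + 2 powr (ps - pj) * K))"
proof -
  define L where "L = (ln 2 :: real)"
  have L: "L > 0" unfolding L_def by simp
  define B where "B = 2 powr (ps - pj) * K"
  have Bpos: "B > 0" unfolding B_def using K by simp
  have fo: "B * (ps * L - 1) = 1" using foc unfolding B_def L_def by simp
  have pos: "ps * L - 1 > 0"
  proof (rule ccontr)
    assume "\<not> ?thesis"
    then have "B * (ps * L - 1) \<le> 0" using Bpos by (simp add: mult_nonneg_nonpos)
    with fo show False by simp
  qed
  define C where "C = 2 powr (q - pj) * K"
  have Ceq: "C = B * exp (L * (q - ps))"
    unfolding C_def B_def L_def powr_def by (simp add: exp_add[symmetric] algebra_simps)
  have "exp (L * (q - ps)) \<ge> 1 + L * (q - ps)" by (rule exp_ge_add_one_self)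
  then have "C \<ge> B * (1 + L * (q - ps))" using Ceq Bpos by simp
  then have i1: "(ps * L - 1) * C \<ge> (ps * L - 1) * (B * (1 + L * (q - ps)))"
    using pos by (simp add: mult_left_mono)
  have "(ps * L - 1) * (B * (1 + L * (q - ps))) = (B * (ps * L - 1)) * (1 + L * (q - ps))" by (simp add: algebra_simps)
  also have "\<dots> = 1 + L * (q - ps)" using fo by simp
  finally have eq: "(ps * L - 1) * (B * (1 + L * (q - ps))) = 1 + L * (q - ps)" .
  have h1: "(ps * L - 1) * C \<ge> 1 + L * (q - ps)" using i1 unfolding eq .
  have Cpos: "C > 0" unfolding C_def using K by simp
  have ex: "(ps * L - 1) * (1 + C) = ps * L - 1 + (ps * L - 1) * C" by (simp add: algebra_simps)
  have "q * L \<le> (ps * L - 1) * (1 + C)" using h1 ex by (simp add: algebra_simps)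
  then have h2: "q \<le> (ps * L - 1) / L * (1 + C)" using L by (simp add: field_simps)
  have "(ps * L - 1) * (1 + B) = ps * L - 1 + B * (ps * L - 1)" by (simp add: algebra_simps)
  then have e3: "(ps * L - 1) * (1 + B) = ps * L" using fo by simp
  have "1 + B > 0" using Bpos by simp
  then have val: "ps / (1 + B) = (ps * L - 1) / L" using e3 L by (simp add: field_simps)
  have "q / (1 + C) \<le> (ps * L - 1) / L" using h2 Cpos by (simp add: field_simps)
  then have "q / (1 + C) \<le> ps / (1 + B)" using val by simp
  then have "n * (q / (1 + C)) \<le> n * (ps / (1 + B))" using n by (intro mult_left_mono) auto
  then show ?thesis unfolding B_def[symmetric] C_def[symmetric] by (simp add: times_divide_eq_right mult.commute mult.left_commute)
qed

lemma Ypos: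
  assumes "P > 0" "\<sigma>2 > 0"
  shows "chanY P \<sigma>2 a b d > 0"
proof -
  have "snr_direct P \<sigma>2 a \<ge> 0" unfolding snr_direct_def using assms by simp
  then show ?thesis unfolding chanY_def by simp
qed

lemma solve_t:
  fixes K :: real assumes K: "K > 0"
  shows "\<exists>t>0. ln t + t - 1 / t = ln K"
proof -
  define f where "f = (\<lambda>t::real. ln t + t - 1 / t)"
  define a where "a = min 1 K"
  define b where "b = max 1 K"
  have a: "a > 0" "a \<le> 1" "a \<le> K" unfolding a_def using K by auto
  have b: "b \<ge> 1" "b \<ge> K" unfolding b_def by auto
  have "a * a \<le> 1" using a mult_le_one[of a a] by simp
  then have "a - 1 / a \<le> 0" using a by (simp add: field_simps)
  moreover have "ln a \<le> ln K" using a K by simp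
  ultimately have fa: "f a \<le> ln K" unfolding f_def by simp
  have "1 * 1 \<le> b * b" using b mult_mono[of 1 b 1 b] by simp
  then have "b - 1 / b \<ge> 0" using b by (simp add: field_simps)
  moreover have "ln b \<ge> ln K" using b K by simp
  ultimately have fb: "ln K \<le> f b" unfolding f_def by simp
  have ab: "a \<le> b" using a b by simp
  have "\<forall>x. a \<le> x \<and> x \<le> b \<longrightarrow> isCont f x"
    unfolding f_def using a by (auto intro!: continuous_intros)
  from IVT[OF fa fb ab this] obtain x where "x \<ge> a" "x \<le> b" "f x = ln K" by blast
  then show ?thesis using a unfolding f_def by (intro exI[of _ x]) auto
qed

theorem theorem1:
  fixes n P \<sigma>2 :: real
    and c w :: "nat \<Rightarrow> real"
    and hsd hsr hrd :: "nat \<Rightarrow> complex"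
  assumes "n > 0" and "P > 0" and "\<sigma>2 > 0"
    and "c 1 \<ge> 0" and "c 2 \<ge> 0"
    and "w 1 > 0" and "w 2 > 0"
  defines "Y \<equiv> \<lambda>i. chanY P \<sigma>2 (hsd i) (hsr i) (hrd i)"
  shows "\<exists>p1 p2. p1 \<ge> 0 \<and> p2 \<ge> 0 \<and>
     (\<forall>q\<ge>0. util n (c 1) (w 1) (w 2) (Y 1) (Y 2) p1 p2 \<ge> util n (c 1) (w 1) (w 2) (Y 1) (Y 2) q p2) \<and>
     (\<forall>q\<ge>0. util n (c 2) (w 2) (w 1) (Y 2) (Y 1) p2 p1 \<ge> util n (c 2) (w 2) (w 1) (Y 2) (Y 1) q p1)"
proof -
  have Y1: "Y 1 > 0" and Y2: "Y 2 > 0" unfolding Y_def using Ypos assms(2,3) by auto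
  define K where "K = (w 2 * Y 2) / (w 1 * Y 1)"
  have K: "K > 0" unfolding K_def using Y1 Y2 assms(6,7) by simp
  have K2: "(w 1 * Y 1) / (w 2 * Y 2) = 1 / K" unfolding K_def by simp
  obtain t where t: "t > 0" "ln t + t - 1 / t = ln K" using solve_t[OF K] by blast
  define L where "L = (ln 2 :: real)"
  have L: "L > 0" unfolding L_def by simp
  define p1 where "p1 = (1 + 1 / t) / L"
  define p2 where "p2 = (1 + t) / L"
  have p1: "p1 \<ge> 0" unfolding p1_def using t L by simp
  have p2: "p2 \<ge> 0" unfolding p2_def using t L by simp
  have d: "L * (p1 - p2) = 1 / t - t" unfolding p1_def p2_def using L by (simp add: field_simps)
  have Kt: "K = t * exp (t - 1 / t)"
  proof -
    have "exp (ln K) = exp (ln t + (t - 1 / t))" using t by (simp add: algebra_simps)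
    then show ?thesis using K t by (simp add: exp_add)
  qed
  have e1: "2 powr (p1 - p2) = exp (1 / t - t)" unfolding powr_def using d L_def by (simp add: mult.commute)
  have e2: "2 powr (p2 - p1) = exp (t - 1 / t)"
  proof -
    have "L * (p2 - p1) = t - 1 / t" using d by (simp add: algebra_simps)
    then show ?thesis unfolding powr_def using L_def by (simp add: mult.commute)
  qed
  have foc1: "2 powr (p1 - p2) * K * (p1 * ln 2 - 1) = 1"
  proof -
    have "p1 * ln 2 - 1 = 1 / t" unfolding p1_def L_def by simp
    moreover have "exp (1 / t - t) * exp (t - 1 / t) = 1" by (simp add: exp_add[symmetric])
    ultimately show ?thesis using e1 Kt t by (simp add: field_simps)
  qed
  have foc2: "2 powr (p2 - p1) * (1 / K) * (p2 * ln 2 - 1) = 1"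
  proof -
    have "p2 * ln 2 - 1 = t" unfolding p2_def L_def by simp
    then show ?thesis using e2 Kt t by (simp add: field_simps)
  qed
  have K1pos: "1 / K > 0" using K by simp
  show ?thesis
  proof (intro exI conjI allI impI)
    show "0 \<le> p1" by (rule p1)
    show "0 \<le> p2" by (rule p2)
    fix q :: real
    show "util n (c 1) (w 1) (w 2) (Y 1) (Y 2) q p2 \<le> util n (c 1) (w 1) (w 2) (Y 1) (Y 2) p1 p2"
      unfolding util_def K_def[symmetric] using key[OF K assms(1) foc1, of q] by simp
  next
    fix q :: real
    show "util n (c 2) (w 2) (w 1) (Y 2) (Y 1) q p1 \<le> util n (c 2) (w 2) (w 1) (Y 2) (Y 1) p2 p1"
      unfolding util_def K2 using key[OF K1pos assms(1) foc2, of q] by simp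
  qed
qed

end
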